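(* Let $k \geq 1$ and let $T$ and $\widetilde{T}$ be binary phylogenetic $X$-trees with $|X| = n \geq 2k+1$. If $A_k(T) = A_k(\widetilde{T})$, then for any two distinct leaves $x,y\in X$, $[x,y]$ is a cherry of $T$ if and only if $[x,y]$ is a cherry of $\widetilde{T}$.
   Context: A phylogenetic $X$-tree is a tree with no vertices of degree 2 whose leaves are bijectively labelled by (and identified with) $X$; binary means maximum degree 3. Two leaves $x,y$ form a cherry $[x,y]$ if they are adjacent to the same vertex. For a binary character $f: X\to\{a,b\}$, $l(f,T)$ is the minimum, over all maps $g:V(T)\to\{a,b\}$ with $g|_X=f$, of the number of edges $\{u,v\}$ with $g(u)\ne g(v)$; $A_k(T)$ is the set of all binary characters $f$ on $X$ with $l(f,T)=k$. *)

theory Defs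
  imports "HOL-Library.FuncSet"
begin

definition adj :: "'v set set \<Rightarrow> 'v \<Rightarrow> 'v \<Rightarrow> bool" where
  "adj E u v \<longleftrightarrow> {u, v} \<in> E"

definition simple_graph :: "'v set \<Rightarrow> 'v set set \<Rightarrow> bool" where
  "simple_graph V E \<longleftrightarrow> finite V \<and> (\<forall>e\<in>E. \<exists>u v. e = {u, v} \<and> u \<noteq> v \<and> u \<in> V \<and> v \<in> V)"

definition connected_graph :: "'v set \<Rightarrow> 'v set set \<Rightarrow> bool" where
  "connected_graph V E \<longleftrightarrow> (\<forall>u\<in>V. \<forall>v\<in>V. (adj E)\<^sup>*\<^sup>* u v)"

(* acyclic: no edge lies on a cycle, i.e. after deleting any edge {u,v}
   there is no longer a walk from u to v *)
definition acyclic_graph :: "'v set set \<Rightarrow> bool" where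
  "acyclic_graph E \<longleftrightarrow> (\<forall>u v. {u, v} \<in> E \<longrightarrow> \<not> (adj (E - {{u, v}}))\<^sup>*\<^sup>* u v)"

definition is_tree :: "'v set \<Rightarrow> 'v set set \<Rightarrow> bool" where
  "is_tree V E \<longleftrightarrow> simple_graph V E \<and> V \<noteq> {} \<and> connected_graph V E \<and> acyclic_graph E"

definition degree :: "'v set set \<Rightarrow> 'v \<Rightarrow> nat" where
  "degree E v = card {e \<in> E. v \<in> e}"

definition leaves :: "'v set \<Rightarrow> 'v set set \<Rightarrow> 'v set" where
  "leaves V E = {v \<in> V. degree E v \<le> 1}"

definition phylo_tree :: "'x set \<Rightarrow> 'v set \<Rightarrow> 'v set set \<Rightarrow> ('x \<Rightarrow> 'v) \<Rightarrow> bool" where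
  "phylo_tree X V E lab \<longleftrightarrow> finite X \<and> is_tree V E \<and> bij_betw lab X (leaves V E)
     \<and> (\<forall>v\<in>V. degree E v \<noteq> 2)"

definition binary_phylo_tree :: "'x set \<Rightarrow> 'v set \<Rightarrow> 'v set set \<Rightarrow> ('x \<Rightarrow> 'v) \<Rightarrow> bool" where
  "binary_phylo_tree X V E lab \<longleftrightarrow> phylo_tree X V E lab \<and> (\<forall>v\<in>V. degree E v \<le> 3)"

definition cherry :: "'v set \<Rightarrow> 'v set set \<Rightarrow> ('x \<Rightarrow> 'v) \<Rightarrow> 'x \<Rightarrow> 'x \<Rightarrow> bool" where
  "cherry V E lab x y \<longleftrightarrow> (\<exists>w\<in>V. {lab x, w} \<in> E \<and> {lab y, w} \<in> E)"

definition changes :: "'v set set \<Rightarrow> ('v \<Rightarrow> bool) \<Rightarrow> nat" where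
  "changes E g = card {e \<in> E. \<exists>u v. e = {u, v} \<and> g u \<noteq> g v}"

(* parsimony score l(f,T); binary states {a,b} are modelled by bool *)
definition pscore :: "'x set \<Rightarrow> 'v set \<Rightarrow> 'v set set \<Rightarrow> ('x \<Rightarrow> 'v) \<Rightarrow> ('x \<Rightarrow> bool) \<Rightarrow> nat" where
  "pscore X V E lab f = Min {changes E g | g. \<forall>x\<in>X. g (lab x) = f x}"

(* A_k(T): binary characters on X (extensional functions X -> bool) with score k *)
definition Achar :: "nat \<Rightarrow> 'x set \<Rightarrow> 'v set \<Rightarrow> 'v set set \<Rightarrow> ('x \<Rightarrow> 'v) \<Rightarrow> ('x \<Rightarrow> bool) set" where
  "Achar k X V E lab = {f \<in> X \<rightarrow>\<^sub>E (UNIV :: bool set). pscore X V E lab f = k}"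

end

theory Submission imports Defs begin

lemma ar1: "odd (m1::nat) \<Longrightarrow> (m1 - 1) div 2 + m2 div 2 = (m1 + m2 - 1) div 2"
  by (elim oddE) (simp add: add.commute)

lemma ar2: "even (m1::nat) \<Longrightarrow> m2 \<ge> 1 \<Longrightarrow> m1 div 2 + (m2 - 1) div 2 = (m1 + m2 - 1) div 2"
proof -
  assume "even m1" "m2 \<ge> 1"
  then obtain a b where "m1 = 2*a" "m2 = Suc b" by (metis evenE Suc_le_D One_nat_def)
  thus ?thesis by simp
qed

lemma ar3: "even (m1::nat) \<Longrightarrow> even m2 \<Longrightarrow> m1 div 2 + m2 div 2 = (m1 + m2) div 2"
  by (elim evenE) simp

lemma ar4: "\<not> (even (m1::nat) \<and> even m2) \<Longrightarrow> m1 \<ge> 1 \<Longrightarrow> m2 \<ge> 1 \<Longrightarrow>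
   (m1 - 1) div 2 + (m2 - 1) div 2 + 1 = (m1 + m2) div 2"
proof -
  assume a: "\<not> (even m1 \<and> even m2)" "m1 \<ge> 1" "m2 \<ge> 1"
  show ?thesis
  proof (cases "even m1")
    case True
    hence "odd m2" using a by simp
    then obtain b where b: "m2 = 2*b+1" by (elim oddE)
    obtain c where c: "m1 = 2*c" using True by (elim evenE)
    have "c \<ge> 1" using a(2) c by simp
    then obtain d where "c = Suc d" by (metis Suc_le_D One_nat_def)
    thus ?thesis using b c by simp
  next
    case False
    then obtain c where c: "m1 = 2*c+1" by (elim oddE)
    show ?thesis
    proof (cases "even m2")
      case True
      then obtain b where b: "m2 = 2*b" by (elim evenE)
      have "b \<ge> 1" using a(3) b by simp
      then obtain d where "b = Suc d" by (metis Suc_le_D One_nat_def)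
      thus ?thesis using b c by simp
    next
      case False
      then obtain b where b: "m2 = 2*b+1" by (elim oddE)
      thus ?thesis using c by simp
    qed
  qed
qed

lemma ar5: "mc \<ge> (1::nat) \<Longrightarrow> n \<le> 1 + mc + mw \<Longrightarrow> (n - 1) div 2 \<le> Suc (mw div 2 + (mc - 1) div 2)"
proof -
  assume a: "mc \<ge> 1" "n \<le> 1 + mc + mw"
  have "(n - 1) div 2 \<le> (mc + mw) div 2" using a(2) by (simp add: div_le_mono)
  also have "\<dots> \<le> Suc (mw div 2 + (mc - 1) div 2)"
  proof -
    obtain c where c: "mc = Suc c" using a(1) by (metis Suc_le_D One_nat_def)
    have "(Suc c + mw) div 2 \<le> Suc (c div 2 + mw div 2)" by linarith
    thus ?thesis using c by simp
  qed
  finally show ?thesis .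
qed

lemma ar6: "2 * k + 1 \<le> (n::nat) \<Longrightarrow> k \<le> (n - 1) div 2"
  by linarith


lemma adj_sym: "adj P a b = adj P b a"
  by (simp add: adj_def insert_commute)

lemma rtr_sym: "(adj P)\<^sup>*\<^sup>* a b \<Longrightarrow> (adj P)\<^sup>*\<^sup>* b a"
proof -
  have "symp (adj P)" by (simp add: symp_def adj_sym)
  hence "symp (adj P)\<^sup>*\<^sup>*" by (rule symp_rtranclp)
  thus "(adj P)\<^sup>*\<^sup>* a b \<Longrightarrow> (adj P)\<^sup>*\<^sup>* b a" by (meson sympD)
qed

lemma rtr_mono: "P \<subseteq> Q \<Longrightarrow> (adj P)\<^sup>*\<^sup>* a b \<Longrightarrow> (adj Q)\<^sup>*\<^sup>* a b"
  by (erule rtranclp_mono[THEN predicate2D, rotated]) (auto simp: adj_def)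

lemma rtr_edge: "{a,b} \<in> P \<Longrightarrow> (adj P)\<^sup>*\<^sup>* a b"
  by (simp add: adj_def r_into_rtranclp)

lemma rtr_touch: "(adj P)\<^sup>*\<^sup>* a b \<Longrightarrow> a \<noteq> b \<Longrightarrow> \<exists>c. {a,c} \<in> P"
  by (erule converse_rtranclpE) (auto simp: adj_def)

lemma rtr_change: "(adj P)\<^sup>*\<^sup>* a b \<Longrightarrow> g a \<noteq> g b \<Longrightarrow> \<exists>c d. {c,d} \<in> P \<and> g c \<noteq> g d"
proof (induction rule: rtranclp_induct)
  case base thus ?case by simp
next
  case (step b c)
  show ?case
  proof (cases "g a = g b")
    case True
    with step have "g b \<noteq> g c" by simp
    with step(2) show ?thesis by (auto simp: adj_def)
  next
    case False thus ?thesis using step by blast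
  qed
qed

locale bintree =
  fixes V :: "'v set" and E :: "'v set set"
  assumes tree: "is_tree V E" and deg2: "\<forall>v\<in>V. degree E v \<noteq> 2" and deg3: "\<forall>v\<in>V. degree E v \<le> 3"
begin

lemma finV: "finite V" using tree by (simp add: is_tree_def simple_graph_def)

lemma simple: "\<forall>e\<in>E. \<exists>u v. e = {u, v} \<and> u \<noteq> v \<and> u \<in> V \<and> v \<in> V"
  using tree by (simp add: is_tree_def simple_graph_def)

lemma E_sub: "E \<subseteq> Pow V"
proof
  fix e assume "e \<in> E"
  then obtain u v where "e = {u,v}" "u \<in> V" "v \<in> V" using simple by blast
  thus "e \<in> Pow V" by simp
qed

lemma finE: "finite E" using finite_subset[OF E_sub] finV by simp

lemma edgeD: assumes "{u,v} \<in> E" shows "u \<in> V" "v \<in> V" "u \<noteq> v"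
proof -
  obtain a b where "{u,v} = {a,b}" "a \<noteq> b" "a \<in> V" "b \<in> V" using simple assms by blast
  thus "u \<in> V" "v \<in> V" "u \<noteq> v" by (auto simp: doubleton_eq_iff)
qed

lemma edge_cases: "e \<in> E \<Longrightarrow> \<exists>u v. e = {u,v} \<and> u \<noteq> v \<and> u \<in> V \<and> v \<in> V"
  using simple by blast

lemma conn: "u \<in> V \<Longrightarrow> v \<in> V \<Longrightarrow> (adj E)\<^sup>*\<^sup>* u v"
  using tree by (simp add: is_tree_def connected_graph_def)

lemma acyc: "{u,v} \<in> E \<Longrightarrow> \<not> (adj (E - {{u,v}}))\<^sup>*\<^sup>* u v"
  using tree by (simp add: is_tree_def acyclic_graph_def)

lemma fin_inc: "finite {e \<in> E. v \<in> e}" using finE by simp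

lemma leaf_edge_unique:
  assumes "degree E a \<le> 1" "e1 \<in> E" "e2 \<in> E" "a \<in> e1" "a \<in> e2" shows "e1 = e2"
  using assms fin_inc[of a] card_le_Suc0_iff_eq[of "{e \<in> E. a \<in> e}"] unfolding degree_def by auto

definition side :: "'v \<Rightarrow> 'v \<Rightarrow> 'v set" where
  "side u v = {z. (adj (E - {{u,v}}))\<^sup>*\<^sup>* v z}"

lemma side_root: "v \<in> side u v" by (simp add: side_def)

lemma side_not: "{u,v} \<in> E \<Longrightarrow> u \<notin> side u v"
  using acyc[of v u] rtr_sym by (auto simp: side_def insert_commute)

lemma side_sub: assumes "{u,v} \<in> E" shows "side u v \<subseteq> V"
proof
  fix z assume "z \<in> side u v"
  hence "(adj (E - {{u,v}}))\<^sup>*\<^sup>* v z" by (simp add: side_def)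
  thus "z \<in> V"
  proof (induction rule: rtranclp_induct)
    case base thus ?case using edgeD assms by auto
  next
    case (step a b) thus ?case using edgeD[of a b] by (auto simp: adj_def)
  qed
qed

lemma side_fin: "{u,v} \<in> E \<Longrightarrow> finite (side u v)"
  using side_sub finV finite_subset by blast

lemma side_closed: assumes "z \<in> side u v" "{z,z'} \<in> E" "{z,z'} \<noteq> {u,v}" shows "z' \<in> side u v"
proof -
  have "adj (E - {{u,v}}) z z'" using assms(2,3) by (simp add: adj_def)
  thus ?thesis using assms(1) unfolding side_def by (blast intro: rtranclp.rtrancl_into_rtrancl)
qed

lemma V_split: assumes "{u,v} \<in> E" shows "V = side u v \<union> side v u"
proof
  show "side u v \<union> side v u \<subseteq> V" using side_sub assms by (auto simp: insert_commute)
next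
  show "V \<subseteq> side u v \<union> side v u"
  proof
    fix z assume "z \<in> V"
    have "v \<in> V" using edgeD assms by auto
    have "(adj E)\<^sup>*\<^sup>* v z" by (rule conn[OF \<open>v \<in> V\<close> \<open>z \<in> V\<close>])
    thus "z \<in> side u v \<union> side v u"
    proof (induction rule: rtranclp_induct)
      case base thus ?case by (simp add: side_root)
    next
      case (step a b)
      have e: "{a,b} \<in> E" using step(2) by (simp add: adj_def)
      show ?case
      proof (cases "{a,b} = {u,v}")
        case True thus ?thesis using side_root[of u v] side_root[of v u] by (auto simp: doubleton_eq_iff)
      next
        case False
        have F2: "{a,b} \<noteq> {v,u}" using False by (auto simp: insert_commute)
        show ?thesis
        proof (cases "a \<in> side u v")
          case True thus ?thesis using side_closed[OF True e False] by simp
        next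
          case False
          hence "a \<in> side v u" using step(3) by simp
          thus ?thesis using side_closed[OF _ e F2] by simp
        qed
      qed
    qed
  qed
qed


abbreviation "Lf \<equiv> leaves V E"

lemma edge_at: assumes "e \<in> E" "v \<in> e" shows "\<exists>z. e = {v,z} \<and> z \<noteq> v"
proof -
  obtain a b where ab: "e = {a,b}" "a \<noteq> b" using edge_cases[OF assms(1)] by blast
  show ?thesis
  proof (cases "v = a")
    case True thus ?thesis using ab by blast
  next
    case False hence "v = b" using ab assms(2) by blast
    thus ?thesis using ab by (metis insert_commute)
  qed
qed

lemma leaf_side: assumes "{u,v} \<in> E" "v \<in> Lf" shows "side u v = {v}"
proof -
  have dv: "degree E v \<le> 1" using assms(2) by (simp add: leaves_def)
  have "(adj (E - {{u,v}}))\<^sup>*\<^sup>* v z \<Longrightarrow> z = v" for z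
  proof (induction rule: rtranclp_induct)
    case base thus ?case by simp
  next
    case (step a b)
    hence "{v,b} \<in> E" "{v,b} \<noteq> {u,v}" by (auto simp: adj_def)
    thus ?case using leaf_edge_unique[OF dv \<open>{v,b} \<in> E\<close> assms(1)] by simp
  qed
  thus ?thesis using side_root by (auto simp: side_def)
qed

lemma nonleaf_deg: "v \<in> V \<Longrightarrow> v \<notin> Lf \<Longrightarrow> degree E v = 3"
  using deg2 deg3 by (force simp: leaves_def)

lemma nbrs:
  assumes "{u,v} \<in> E" "v \<notin> Lf"
  obtains w1 w2 where "{v,w1} \<in> E" "{v,w2} \<in> E" "w1 \<noteq> w2" "w1 \<noteq> u" "w2 \<noteq> u"
    "\<And>e. e \<in> E \<Longrightarrow> v \<in> e \<Longrightarrow> e = {v,u} \<or> e = {v,w1} \<or> e = {v,w2}"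
proof -
  have vV: "v \<in> V" using edgeD assms by auto
  let ?I = "{e \<in> E. v \<in> e}"
  have c3: "card ?I = 3" using nonleaf_deg[OF vV assms(2)] by (simp add: degree_def)
  have uv: "{v,u} \<in> ?I" using assms(1) by (simp add: insert_commute)
  have "card (?I - {{v,u}}) = 2" using c3 uv fin_inc by (simp add: card_Diff_singleton)
  then obtain e1 e2 where N: "?I - {{v,u}} = {e1,e2}" "e1 \<noteq> e2" by (meson card_2_iff)
  have e1: "e1 \<in> E" "v \<in> e1" "e1 \<noteq> {v,u}" using N by auto
  have e2: "e2 \<in> E" "v \<in> e2" "e2 \<noteq> {v,u}" using N by auto
  obtain w1 where w1: "e1 = {v,w1}" using edge_at e1 by blast
  obtain w2 where w2: "e2 = {v,w2}" using edge_at e2 by blast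
  show ?thesis
  proof (rule that)
    show "{v,w1} \<in> E" "{v,w2} \<in> E" using e1 e2 w1 w2 by auto
    show "w1 \<noteq> w2" using N(2) w1 w2 by auto
    show "w1 \<noteq> u" "w2 \<noteq> u" using e1 e2 w1 w2 by auto
    fix e assume "e \<in> E" "v \<in> e"
    hence "e \<in> insert {v,u} (?I - {{v,u}})" by auto
    thus "e = {v,u} \<or> e = {v,w1} \<or> e = {v,w2}" using N w1 w2 by auto
  qed
qed

definition Ev :: "'v \<Rightarrow> 'v set set" where "Ev v = {e \<in> E. v \<notin> e}"

lemma avoid:
  assumes "{v,w} \<in> E" "z \<in> side v w" shows "(adj (Ev v))\<^sup>*\<^sup>* w z"
proof -
  have "(adj (E - {{v,w}}))\<^sup>*\<^sup>* w z" using assms(2) by (simp add: side_def)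
  thus ?thesis
  proof (induction rule: rtranclp_induct)
    case base thus ?case by simp
  next
    case (step a b)
    have "v \<noteq> a"
    proof
      assume "v = a" hence "v \<in> side v w" using step(1) by (simp add: side_def)
      thus False using side_not[OF assms(1)] by simp
    qed
    moreover have "v \<noteq> b"
    proof
      assume "v = b" hence "v \<in> side v w" using step(1,2) by (simp add: side_def rtranclp.rtrancl_into_rtrancl)
      thus False using side_not[OF assms(1)] by simp
    qed
    ultimately have "adj (Ev v) a b" using step(2) by (auto simp: adj_def Ev_def)
    thus ?case using step(3) by (rule rtranclp.rtrancl_into_rtrancl[rotated])
  qed
qed

lemma side_nonleaf:
  assumes "{u,v} \<in> E" "{v,w1} \<in> E" "{v,w2} \<in> E" "w1 \<noteq> w2" "w1 \<noteq> u" "w2 \<noteq> u"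
    "\<And>e. e \<in> E \<Longrightarrow> v \<in> e \<Longrightarrow> e = {v,u} \<or> e = {v,w1} \<or> e = {v,w2}"
  shows "side u v = insert v (side v w1 \<union> side v w2)" "side v w1 \<inter> side v w2 = {}"
    "v \<notin> side v w1" "v \<notin> side v w2"
proof -
  show nv1: "v \<notin> side v w1" "v \<notin> side v w2" using side_not assms by auto
  have sub: "side v w \<subseteq> side u v" if "{v,w} \<in> E" "w \<noteq> u" for w
  proof
    fix z assume "z \<in> side v w"
    hence "(adj (Ev v))\<^sup>*\<^sup>* w z" using avoid that(1) by simp
    moreover have "Ev v \<subseteq> E - {{u,v}}" by (auto simp: Ev_def)
    ultimately have r: "(adj (E - {{u,v}}))\<^sup>*\<^sup>* w z" by (rule rtr_mono[rotated])
    have "{v,w} \<noteq> {u,v}" using that edgeD[OF that(1)] by (auto simp: doubleton_eq_iff)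
    hence "adj (E - {{u,v}}) v w" using that(1) by (simp add: adj_def)
    hence "(adj (E - {{u,v}}))\<^sup>*\<^sup>* v z" using r by (rule converse_rtranclp_into_rtranclp)
    thus "z \<in> side u v" by (simp add: side_def)
  qed
  have "side u v \<subseteq> insert v (side v w1 \<union> side v w2)"
  proof
    fix z assume "z \<in> side u v"
    hence "(adj (E - {{u,v}}))\<^sup>*\<^sup>* v z" by (simp add: side_def)
    thus "z \<in> insert v (side v w1 \<union> side v w2)"
    proof (induction rule: rtranclp_induct)
      case base thus ?case by simp
    next
      case (step a b)
      have e: "{a,b} \<in> E" "{a,b} \<noteq> {u,v}" using step(2) by (auto simp: adj_def)
      show ?case
      proof (cases "a = v")
        case True
        have "{a,b} = {v,u} \<or> {a,b} = {v,w1} \<or> {a,b} = {v,w2}" using assms(7)[OF e(1)] True by simp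
        moreover have "{v,u} = {u,v}" by (rule insert_commute)
        ultimately have "{v,b} = {v,w1} \<or> {v,b} = {v,w2}" using e(2) True by metis
        hence "b = w1 \<or> b = w2" by (metis doubleton_eq_iff)
        thus ?thesis using side_root[of w1 v] side_root[of w2 v] by blast
      next
        case False
        hence a12: "a \<in> side v w1 \<or> a \<in> side v w2" using step(3) by simp
        show ?thesis
        proof (cases "{a,b} = {v,w1}")
          case True hence "b = v \<or> b = w1" by (metis doubleton_eq_iff)
          thus ?thesis using side_root[of w1 v] by blast
        next
          case F1: False
          show ?thesis
          proof (cases "{a,b} = {v,w2}")
            case True hence "b = v \<or> b = w2" by (metis doubleton_eq_iff)
            thus ?thesis using side_root[of w2 v] by blast
          next
            case F2: False
            show ?thesis
            proof (cases "a \<in> side v w1")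
              case True thus ?thesis using side_closed[OF True e(1) F1] by blast
            next
              case False
              hence "a \<in> side v w2" using a12 by blast
              thus ?thesis using side_closed[OF _ e(1) F2] by blast
            qed
          qed
        qed
      qed
    qed
  qed
  moreover have "insert v (side v w1 \<union> side v w2) \<subseteq> side u v"
    using sub[OF assms(2,5)] sub[OF assms(3,6)] side_root[of v u] by simp
  ultimately show "side u v = insert v (side v w1 \<union> side v w2)" by blast
  show "side v w1 \<inter> side v w2 = {}"
  proof (rule ccontr)
    assume "side v w1 \<inter> side v w2 \<noteq> {}"
    then obtain z where z: "z \<in> side v w1" "z \<in> side v w2" by blast
    have "(adj (Ev v))\<^sup>*\<^sup>* w1 z" "(adj (Ev v))\<^sup>*\<^sup>* w2 z" using avoid assms z by auto
    hence "(adj (Ev v))\<^sup>*\<^sup>* w1 w2" using rtr_sym by (meson rtranclp_trans)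
    moreover have "Ev v \<subseteq> E - {{v,w2}}" by (auto simp: Ev_def)
    ultimately have r: "(adj (E - {{v,w2}}))\<^sup>*\<^sup>* w1 w2" by (rule rtr_mono[rotated])
    have "{v,w1} \<noteq> {v,w2}" using assms(4) by (auto simp: doubleton_eq_iff)
    hence "adj (E - {{v,w2}}) v w1" using assms(2) by (simp add: adj_def)
    hence "(adj (E - {{v,w2}}))\<^sup>*\<^sup>* v w2" using r by (rule converse_rtranclp_into_rtranclp)
    thus False using acyc[OF assms(3)] by simp
  qed
qed


definition L :: "'v \<Rightarrow> 'v \<Rightarrow> 'v set" where "L u v = side u v \<inter> Lf"
definition SE :: "'v \<Rightarrow> 'v \<Rightarrow> 'v set set" where "SE u v = {e \<in> E. e \<subseteq> side u v}"

definition cfg :: "'v \<Rightarrow> 'v \<Rightarrow> 'v \<Rightarrow> 'v \<Rightarrow> bool" where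
  "cfg u v w1 w2 \<longleftrightarrow> {u,v} \<in> E \<and> {v,w1} \<in> E \<and> {v,w2} \<in> E \<and> w1 \<noteq> w2 \<and> w1 \<noteq> u \<and> w2 \<noteq> u \<and>
     (\<forall>e\<in>E. v \<in> e \<longrightarrow> e = {v,u} \<or> e = {v,w1} \<or> e = {v,w2})"

lemma cfg_sym: "cfg u v w1 w2 \<Longrightarrow> cfg u v w2 w1"
  unfolding cfg_def by blast

lemma cfg_exists: assumes "{u,v} \<in> E" "v \<notin> Lf" shows "\<exists>w1 w2. cfg u v w1 w2"
proof (rule nbrs[OF assms])
  fix w1 w2 assume "{v,w1} \<in> E" "{v,w2} \<in> E" "w1 \<noteq> w2" "w1 \<noteq> u" "w2 \<noteq> u"
    "\<And>e. e \<in> E \<Longrightarrow> v \<in> e \<Longrightarrow> e = {v,u} \<or> e = {v,w1} \<or> e = {v,w2}"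
  hence "cfg u v w1 w2" using assms(1) unfolding cfg_def by simp
  thus ?thesis by blast
qed

lemma cfg_side:
  assumes "cfg u v w1 w2"
  shows "side u v = insert v (side v w1 \<union> side v w2)" "side v w1 \<inter> side v w2 = {}"
    "v \<notin> side v w1" "v \<notin> side v w2"
  using side_nonleaf[of u v w1 w2] assms unfolding cfg_def by auto

lemma cfg_E: "cfg u v w1 w2 \<Longrightarrow> {u,v} \<in> E \<and> {v,w1} \<in> E \<and> {v,w2} \<in> E"
  unfolding cfg_def by blast

lemma cfg_card_side: assumes "cfg u v w1 w2" shows "card (side v w1) < card (side u v)"
proof -
  have f: "finite (side u v)" using side_fin cfg_E[OF assms] by blast
  have "side v w1 \<subseteq> side u v" "v \<in> side u v" "v \<notin> side v w1" using cfg_side[OF assms] side_root by auto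
  hence "side v w1 \<subset> side u v" by blast
  thus ?thesis using f psubset_card_mono by blast
qed

lemma L_fin: "{u,v} \<in> E \<Longrightarrow> finite (L u v)"
  unfolding L_def using side_fin by blast

lemma cfg_L: assumes "cfg u v w1 w2" "v \<notin> Lf"
  shows "L u v = L v w1 \<union> L v w2" "L v w1 \<inter> L v w2 = {}" "card (L u v) = card (L v w1) + card (L v w2)"
proof -
  show a: "L u v = L v w1 \<union> L v w2" using cfg_side(1)[OF assms(1)] assms(2) unfolding L_def by auto
  show b: "L v w1 \<inter> L v w2 = {}" using cfg_side(2)[OF assms(1)] unfolding L_def by blast
  have "finite (L v w1)" "finite (L v w2)" using L_fin cfg_E[OF assms(1)] by auto
  thus "card (L u v) = card (L v w1) + card (L v w2)" using a b by (simp add: card_Un_disjoint)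
qed

lemma cfg_SE: assumes "cfg u v w1 w2"
  shows "SE v w1 \<subseteq> SE u v" "SE v w2 \<subseteq> SE u v" "{v,w1} \<in> SE u v" "{v,w2} \<in> SE u v"
    "{v,w1} \<notin> SE v w1" "{v,w1} \<notin> SE v w2" "{v,w2} \<notin> SE v w1" "{v,w2} \<notin> SE v w2"
    "SE v w1 \<inter> SE v w2 = {}"
proof -
  note S = cfg_side[OF assms] and EE = cfg_E[OF assms]
  show "SE v w1 \<subseteq> SE u v" "SE v w2 \<subseteq> SE u v" using S(1) unfolding SE_def by auto
  show "{v,w1} \<in> SE u v" "{v,w2} \<in> SE u v" using S(1) EE side_root[of w1 v] side_root[of w2 v]
    unfolding SE_def by auto
  show "{v,w1} \<notin> SE v w1" "{v,w1} \<notin> SE v w2" "{v,w2} \<notin> SE v w1" "{v,w2} \<notin> SE v w2"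
    using S(3,4) unfolding SE_def by auto
  show "SE v w1 \<inter> SE v w2 = {}"
  proof (rule ccontr)
    assume "SE v w1 \<inter> SE v w2 \<noteq> {}"
    then obtain e where e: "e \<in> E" "e \<subseteq> side v w1" "e \<subseteq> side v w2" unfolding SE_def by blast
    obtain a b where "e = {a,b}" using edge_cases[OF e(1)] by blast
    hence "a \<in> side v w1" "a \<in> side v w2" using e by auto
    thus False using S(2) by auto
  qed
qed

lemma L_nonempty: "{u,v} \<in> E \<Longrightarrow> L u v \<noteq> {}"
proof (induction "card (side u v)" arbitrary: u v rule: less_induct)
  case less
  show ?case
  proof (cases "v \<in> Lf")
    case True thus ?thesis using side_root[of v u] unfolding L_def by blast
  next
    case False
    then obtain w1 w2 where c: "cfg u v w1 w2" using cfg_exists less(2) by blast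
    have "L v w1 \<noteq> {}" using less(1)[OF cfg_card_side[OF c]] cfg_E[OF c] by blast
    thus ?thesis using cfg_L(1)[OF c False] by blast
  qed
qed

lemma leaf_L: "{u,v} \<in> E \<Longrightarrow> v \<in> Lf \<Longrightarrow> L u v = {v}"
  using leaf_side unfolding L_def by auto


definition pe :: "'v \<times> 'v \<times> 'v set set \<Rightarrow> 'v set set" where "pe p = snd (snd p)"

definition okp :: "'v set set \<Rightarrow> 'v \<times> 'v \<times> 'v set set \<Rightarrow> bool" where
  "okp Es p \<longleftrightarrow> fst p \<in> Lf \<and> fst (snd p) \<in> Lf \<and> fst p \<noteq> fst (snd p) \<and> pe p \<subseteq> Es \<and>
     (adj (pe p))\<^sup>*\<^sup>* (fst p) (fst (snd p))"

definition vp :: "'v set set \<Rightarrow> ('v \<times> 'v \<times> 'v set set) list \<Rightarrow> bool" where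
  "vp Es ps \<longleftrightarrow> (\<forall>p\<in>set ps. okp Es p) \<and> sorted_wrt (\<lambda>p q. pe p \<inter> pe q = {}) ps"

lemma vp_Nil[simp]: "vp Es []" by (simp add: vp_def)

lemma vp_sub: "vp Es ps \<Longrightarrow> p \<in> set ps \<Longrightarrow> pe p \<subseteq> Es" by (simp add: vp_def okp_def)

lemma vp_mono: "Es \<subseteq> Fs \<Longrightarrow> vp Es ps \<Longrightarrow> vp Fs ps" by (auto simp: vp_def okp_def)

lemma vp_append: "vp Es xs \<Longrightarrow> vp Es ys \<Longrightarrow> (\<forall>p\<in>set xs. \<forall>q\<in>set ys. pe p \<inter> pe q = {}) \<Longrightarrow> vp Es (xs @ ys)"
  by (auto simp: vp_def sorted_wrt_append)

lemma vp_cons: "okp Es p \<Longrightarrow> vp Es ps \<Longrightarrow> (\<forall>q\<in>set ps. pe p \<inter> pe q = {}) \<Longrightarrow> vp Es (p # ps)"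
  by (auto simp: vp_def)

lemma vp_disj: "vp A xs \<Longrightarrow> vp B ys \<Longrightarrow> A \<inter> B = {} \<Longrightarrow> \<forall>p\<in>set xs. \<forall>q\<in>set ys. pe p \<inter> pe q = {}"
  using vp_sub by blast

definition PE :: "'v \<Rightarrow> 'v \<Rightarrow> 'v \<Rightarrow> bool" where
  "PE u v y \<longleftrightarrow> (\<exists>ps l P0. vp (SE u v) ps \<and> length ps = (card (L u v) - 1) div 2 \<and> P0 \<subseteq> SE u v \<and>
     (adj P0)\<^sup>*\<^sup>* l v \<and> l \<in> L u v \<and> (\<forall>p\<in>set ps. P0 \<inter> pe p = {}) \<and> (l = y \<or> (ps \<noteq> [] \<and> fst (hd ps) = y)))"

definition PA :: "'v \<Rightarrow> 'v \<Rightarrow> 'v \<Rightarrow> bool" where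
  "PA u v y \<longleftrightarrow> (\<exists>ps. vp (SE u v) ps \<and> length ps = card (L u v) div 2 \<and> ps \<noteq> [] \<and> fst (hd ps) = y)"


lemma L_sub_Lf: "L u v \<subseteq> Lf" unfolding L_def by blast

lemma step:
  assumes c: "cfg u v w1 w2" and nl: "v \<notin> Lf" and y1: "y \<in> L v w1"
    and IH1E: "PE v w1 y" and IH1A: "y \<noteq> w1 \<Longrightarrow> PA v w1 y"
    and IH2: "\<And>y2. y2 \<in> L v w2 \<Longrightarrow> PE v w2 y2 \<and> (y2 \<noteq> w2 \<longrightarrow> PA v w2 y2)"
  shows "PE u v y \<and> PA u v y"
proof -
  note SEs = cfg_SE[OF c]
  note Ls = cfg_L[OF c nl]
  note EE = cfg_E[OF c]
  define m1 where "m1 = card (L v w1)"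
  define m2 where "m2 = card (L v w2)"
  have mm: "card (L u v) = m1 + m2" using Ls(3) m1_def m2_def by simp
  have m1p: "m1 \<ge> 1" using L_nonempty[of v w1] L_fin[of v w1] EE unfolding m1_def
    by (simp add: Suc_leI card_gt_0_iff)
  have m2p: "m2 \<ge> 1" using L_nonempty[of v w2] L_fin[of v w2] EE unfolding m2_def
    by (simp add: Suc_leI card_gt_0_iff)
  obtain y2 where y2: "y2 \<in> L v w2" using L_nonempty[of v w2] EE by blast
  have Ma2: "\<exists>qs. vp (SE v w2) qs \<and> length qs = m2 div 2"
  proof (cases "y2 = w2")
    case True
    hence "w2 \<in> Lf" using y2 L_sub_Lf by blast
    hence "L v w2 = {w2}" using leaf_L EE by blast
    hence "m2 = 1" unfolding m2_def by simp
    thus ?thesis by (intro exI[of _ "[]"]) simp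
  next
    case False
    thus ?thesis using IH2[OF y2] unfolding PA_def m2_def by blast
  qed
  obtain ps2 l2 P02 where B2: "vp (SE v w2) ps2" "length ps2 = (m2 - 1) div 2" "P02 \<subseteq> SE v w2"
     "(adj P02)\<^sup>*\<^sup>* l2 w2" "l2 \<in> L v w2" "\<forall>p\<in>set ps2. P02 \<inter> pe p = {}"
    using IH2[OF y2] unfolding PE_def m2_def by blast
  obtain ps1 l1 P01 where B1: "vp (SE v w1) ps1" "length ps1 = (m1 - 1) div 2" "P01 \<subseteq> SE v w1"
     "(adj P01)\<^sup>*\<^sup>* l1 w1" "l1 \<in> L v w1" "\<forall>p\<in>set ps1. P01 \<inter> pe p = {}"
     "l1 = y \<or> (ps1 \<noteq> [] \<and> fst (hd ps1) = y)"
    using IH1E unfolding PE_def m1_def by blast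
  obtain qs2 where Q2: "vp (SE v w2) qs2" "length qs2 = m2 div 2" using Ma2 by blast
  have even_ne: "y \<noteq> w1" if "even m1"
  proof
    assume "y = w1"
    hence "w1 \<in> Lf" using y1 L_sub_Lf by blast
    hence "L v w1 = {w1}" using leaf_L EE by blast
    hence "m1 = 1" unfolding m1_def by simp
    thus False using that by simp
  qed
  have dis12: "\<forall>p\<in>set xs. \<forall>q\<in>set ys. pe p \<inter> pe q = {}" if "vp (SE v w1) xs" "vp (SE v w2) ys" for xs ys
    using vp_disj[OF that SEs(9)] .
  have dis21: "\<forall>p\<in>set xs. \<forall>q\<in>set ys. pe p \<inter> pe q = {}" if "vp (SE v w2) xs" "vp (SE v w1) ys" for xs ys
    using vp_disj[OF that] SEs(9) by blast
  have vpu1: "vp (SE u v) xs" if "vp (SE v w1) xs" for xs using vp_mono[OF SEs(1) that] .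
  have vpu2: "vp (SE u v) xs" if "vp (SE v w2) xs" for xs using vp_mono[OF SEs(2) that] .
  have Lsub1: "L v w1 \<subseteq> L u v" and Lsub2: "L v w2 \<subseteq> L u v" using Ls(1) by auto
  have PEg: "PE u v y"
  proof (cases "even m1")
    case False
    define P0 where "P0 = insert {v,w1} P01"
    have "vp (SE u v) (ps1 @ qs2)" using vp_append[OF vpu1[OF B1(1)] vpu2[OF Q2(1)] dis12[OF B1(1) Q2(1)]] .
    moreover have "length (ps1 @ qs2) = (card (L u v) - 1) div 2" using B1(2) Q2(2) mm ar1[OF False, of m2] by simp
    moreover have "P0 \<subseteq> SE u v" using B1(3) SEs(1,3) unfolding P0_def by blast
    moreover have "(adj P0)\<^sup>*\<^sup>* l1 v"
    proof -
      have "(adj P0)\<^sup>*\<^sup>* l1 w1" using rtr_mono[OF _ B1(4), of P0] unfolding P0_def by blast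
      moreover have "adj P0 w1 v" unfolding P0_def adj_def by (simp add: insert_commute)
      ultimately show ?thesis by (rule rtranclp.rtrancl_into_rtrancl)
    qed
    moreover have "l1 \<in> L u v" using B1(5) Lsub1 by blast
    moreover have "\<forall>p\<in>set (ps1 @ qs2). P0 \<inter> pe p = {}"
    proof
      fix p assume "p \<in> set (ps1 @ qs2)"
      hence "p \<in> set ps1 \<or> p \<in> set qs2" by simp
      thus "P0 \<inter> pe p = {}"
      proof
        assume p: "p \<in> set ps1"
        have "pe p \<subseteq> SE v w1" using vp_sub[OF B1(1) p] .
        thus ?thesis using B1(6) p SEs(5) unfolding P0_def by blast
      next
        assume p: "p \<in> set qs2"
        have "pe p \<subseteq> SE v w2" using vp_sub[OF Q2(1) p] .
        thus ?thesis using B1(3) SEs(6,9) unfolding P0_def by blast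
      qed
    qed
    moreover have "l1 = y \<or> (ps1 @ qs2 \<noteq> [] \<and> fst (hd (ps1 @ qs2)) = y)" using B1(7) by auto
    ultimately show ?thesis unfolding PE_def by blast
  next
    case True
    obtain qs1 where Q1: "vp (SE v w1) qs1" "length qs1 = m1 div 2" "qs1 \<noteq> []" "fst (hd qs1) = y"
      using IH1A[OF even_ne[OF True]] unfolding PA_def m1_def by blast
    define P0 where "P0 = insert {v,w2} P02"
    have "vp (SE u v) (qs1 @ ps2)" using vp_append[OF vpu1[OF Q1(1)] vpu2[OF B2(1)] dis12[OF Q1(1) B2(1)]] .
    moreover have "length (qs1 @ ps2) = (card (L u v) - 1) div 2" using Q1(2) B2(2) mm ar2[OF True m2p] by simp
    moreover have "P0 \<subseteq> SE u v" using B2(3) SEs(2,4) unfolding P0_def by blast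
    moreover have "(adj P0)\<^sup>*\<^sup>* l2 v"
    proof -
      have "(adj P0)\<^sup>*\<^sup>* l2 w2" using rtr_mono[OF _ B2(4), of P0] unfolding P0_def by blast
      moreover have "adj P0 w2 v" unfolding P0_def adj_def by (simp add: insert_commute)
      ultimately show ?thesis by (rule rtranclp.rtrancl_into_rtrancl)
    qed
    moreover have "l2 \<in> L u v" using B2(5) Lsub2 by blast
    moreover have "\<forall>p\<in>set (qs1 @ ps2). P0 \<inter> pe p = {}"
    proof
      fix p assume "p \<in> set (qs1 @ ps2)"
      hence "p \<in> set qs1 \<or> p \<in> set ps2" by simp
      thus "P0 \<inter> pe p = {}"
      proof
        assume p: "p \<in> set qs1"
        have "pe p \<subseteq> SE v w1" using vp_sub[OF Q1(1) p] .
        thus ?thesis using B2(3) SEs(7,9) unfolding P0_def by blast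
      next
        assume p: "p \<in> set ps2"
        have "pe p \<subseteq> SE v w2" using vp_sub[OF B2(1) p] .
        thus ?thesis using B2(6) p SEs(8) unfolding P0_def by blast
      qed
    qed
    moreover have "qs1 @ ps2 \<noteq> [] \<and> fst (hd (qs1 @ ps2)) = y" using Q1(3,4) by simp
    ultimately show ?thesis unfolding PE_def by blast
  qed
  have PAg: "PA u v y"
  proof (cases "even m1 \<and> even m2")
    case True
    obtain qs1 where Q1: "vp (SE v w1) qs1" "length qs1 = m1 div 2" "qs1 \<noteq> []" "fst (hd qs1) = y"
      using IH1A[OF even_ne] True unfolding PA_def m1_def by blast
    have "vp (SE u v) (qs1 @ qs2)" using vp_append[OF vpu1[OF Q1(1)] vpu2[OF Q2(1)] dis12[OF Q1(1) Q2(1)]] .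
    moreover have "length (qs1 @ qs2) = card (L u v) div 2" using Q1(2) Q2(2) mm True ar3[of m1 m2] by simp
    ultimately show ?thesis using Q1(3,4) unfolding PA_def by auto
  next
    case False
    define np where "np = (l1, l2, P01 \<union> {{v,w1},{v,w2}} \<union> P02)"
    have okn: "okp (SE u v) np"
    proof -
      have "l1 \<in> Lf" "l2 \<in> Lf" using B1(5) B2(5) L_sub_Lf by auto
      moreover have "l1 \<noteq> l2" using B1(5) B2(5) Ls(2) by blast
      moreover have "pe np \<subseteq> SE u v" using B1(3) B2(3) SEs(1-4) unfolding np_def pe_def by auto
      moreover have "(adj (pe np))\<^sup>*\<^sup>* l1 l2"
      proof -
        let ?P = "pe np"
        have a: "(adj ?P)\<^sup>*\<^sup>* l1 w1" using rtr_mono[OF _ B1(4), of ?P] unfolding np_def pe_def by auto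
        have b: "(adj ?P)\<^sup>*\<^sup>* w1 w2"
        proof -
          have "adj ?P w1 v" "adj ?P v w2" unfolding np_def pe_def adj_def by (auto simp: insert_commute)
          thus ?thesis by (meson r_into_rtranclp rtranclp_trans)
        qed
        have "(adj ?P)\<^sup>*\<^sup>* l2 w2" using rtr_mono[OF _ B2(4), of ?P] unfolding np_def pe_def by auto
        hence "(adj ?P)\<^sup>*\<^sup>* w2 l2" by (rule rtr_sym)
        thus ?thesis using a b by (meson rtranclp_trans)
      qed
      ultimately show ?thesis unfolding okp_def np_def by simp
    qed
    have d1: "\<forall>q\<in>set ps1. pe np \<inter> pe q = {}"
    proof
      fix q assume q: "q \<in> set ps1"
      have "pe q \<subseteq> SE v w1" using vp_sub[OF B1(1) q] .
      thus "pe np \<inter> pe q = {}" using B1(6) q SEs(5,7,9) B2(3) unfolding np_def pe_def by auto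
    qed
    have d2: "\<forall>q\<in>set ps2. pe np \<inter> pe q = {}"
    proof
      fix q assume q: "q \<in> set ps2"
      have "pe q \<subseteq> SE v w2" using vp_sub[OF B2(1) q] .
      thus "pe np \<inter> pe q = {}" using B2(6) q SEs(6,8,9) B1(3) unfolding np_def pe_def by auto
    qed
    have v12: "vp (SE u v) (ps1 @ ps2)" using vp_append[OF vpu1[OF B1(1)] vpu2[OF B2(1)] dis12[OF B1(1) B2(1)]] .
    have len: "length ps1 + length ps2 + 1 = card (L u v) div 2" using B1(2) B2(2) mm ar4[OF False m1p m2p] by simp
    show ?thesis
    proof (cases "l1 = y")
      case True
      have "vp (SE u v) (np # ps1 @ ps2)" using vp_cons[OF okn v12] d1 d2 by auto
      thus ?thesis using len True unfolding PA_def np_def by auto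
    next
      case False
      hence ne: "ps1 \<noteq> []" "fst (hd ps1) = y" using B1(7) by auto
      have "vp (SE u v) (np # ps2)" using vp_cons[OF okn vpu2[OF B2(1)] d2] .
      moreover have "\<forall>p\<in>set ps1. \<forall>q\<in>set (np # ps2). pe p \<inter> pe q = {}"
        using d1 dis12[OF B1(1) B2(1)] by auto
      ultimately have "vp (SE u v) (ps1 @ np # ps2)" using vp_append[OF vpu1[OF B1(1)]] by blast
      thus ?thesis using len ne unfolding PA_def by auto
    qed
  qed
  show ?thesis using PEg PAg by blast
qed


lemma pairing: "{u,v} \<in> E \<Longrightarrow> y \<in> L u v \<Longrightarrow> PE u v y \<and> (y \<noteq> v \<longrightarrow> PA u v y)"
proof (induction "card (side u v)" arbitrary: u v y rule: less_induct)
  case less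
  show ?case
  proof (cases "v \<in> Lf")
    case True
    have Lv: "L u v = {v}" using leaf_L[OF less(2) True] .
    hence "y = v" using less(3) by simp
    moreover have "PE u v v"
      unfolding PE_def using Lv by (intro exI[of _ "[]"] exI[of _ v] exI[of _ "{}"]) simp
    ultimately show ?thesis by simp
  next
    case False
    then obtain w1 w2 where c: "cfg u v w1 w2" using cfg_exists less(2) by blast
    have IH: "PE v w y' \<and> (y' \<noteq> w \<longrightarrow> PA v w y')" if "cfg u v w w'" "y' \<in> L v w" for w w' y'
      using less(1)[OF cfg_card_side[OF that(1)]] cfg_E[OF that(1)] that(2) by blast
    have "y \<in> L v w1 \<or> y \<in> L v w2" using cfg_L(1)[OF c False] less(3) by blast
    thus ?thesis
    proof
      assume y1: "y \<in> L v w1"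
      have "PE u v y \<and> PA u v y"
        using step[OF c False y1] IH[OF c y1] IH[OF cfg_sym[OF c]] by blast
      thus ?thesis by blast
    next
      assume y2: "y \<in> L v w2"
      have "PE u v y \<and> PA u v y"
        using step[OF cfg_sym[OF c] False y2] IH[OF cfg_sym[OF c] y2] IH[OF c] by blast
      thus ?thesis by blast
    qed
  qed
qed


lemma SE_sub: "SE u v \<subseteq> E" unfolding SE_def by blast

lemma noncherry_aux:
  assumes c: "cfg x p c w" and x: "x \<in> Lf" and y: "y \<in> Lf" "y \<in> side p w" and yw: "y \<noteq> w"
    and pnl: "p \<notin> Lf"
  shows "\<exists>ps. vp E ps \<and> length ps \<ge> (card Lf - 1) div 2 \<and> length ps \<ge> 2 \<and> fst (ps!0) = x \<and> fst (ps!1) = y"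
proof -
  note SEs = cfg_SE[OF c] and Ls = cfg_L[OF c pnl] and EE = cfg_E[OF c] and Ss = cfg_side[OF c]
  have yL: "y \<in> L p w" using y unfolding L_def by blast
  obtain qs1 where Q1: "vp (SE p w) qs1" "length qs1 = card (L p w) div 2" "qs1 \<noteq> []" "fst (hd qs1) = y"
    using pairing[OF _ yL] EE yw unfolding PA_def by blast
  obtain z where z: "z \<in> L p c" using L_nonempty[of p c] EE by blast
  obtain ps2 l2 P02 where B2: "vp (SE p c) ps2" "length ps2 = (card (L p c) - 1) div 2" "P02 \<subseteq> SE p c"
     "(adj P02)\<^sup>*\<^sup>* l2 c" "l2 \<in> L p c" "\<forall>q\<in>set ps2. P02 \<inter> pe q = {}"
    using pairing[OF _ z] EE unfolding PE_def by blast
  define np where "np = (x, l2, insert {x,p} (insert {p,c} P02))"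
  have xs: "x \<notin> side p c" "x \<notin> side p w" using side_not[of x p] EE Ss(1) by auto
  have cw: "c \<notin> side p w" using side_root[of c p] Ss(2) by blast
  have xpS: "{x,p} \<notin> SE p c" "{x,p} \<notin> SE p w" using xs unfolding SE_def by auto
  have pcS: "{p,c} \<notin> SE p w" using cw unfolding SE_def by auto
  have okn: "okp E np"
  proof -
    have "l2 \<in> Lf" using B2(5) L_sub_Lf by blast
    moreover have "x \<noteq> l2" using B2(5) xs unfolding L_def by blast
    moreover have "pe np \<subseteq> E" using B2(3) SE_sub EE unfolding np_def pe_def by (auto simp: insert_commute)
    moreover have "(adj (pe np))\<^sup>*\<^sup>* x l2"
    proof -
      let ?P = "pe np"
      have "adj ?P x p" "adj ?P p c" unfolding np_def pe_def adj_def by auto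
      hence a: "(adj ?P)\<^sup>*\<^sup>* x c" by (meson r_into_rtranclp rtranclp_trans)
      have "(adj ?P)\<^sup>*\<^sup>* l2 c" using rtr_mono[OF _ B2(4), of ?P] unfolding np_def pe_def by auto
      hence "(adj ?P)\<^sup>*\<^sup>* c l2" by (rule rtr_sym)
      thus ?thesis using a by (meson rtranclp_trans)
    qed
    ultimately show ?thesis using x unfolding okp_def np_def by simp
  qed
  have d1: "\<forall>q\<in>set qs1. pe np \<inter> pe q = {}"
  proof
    fix q assume q: "q \<in> set qs1"
    have "pe q \<subseteq> SE p w" using vp_sub[OF Q1(1) q] .
    thus "pe np \<inter> pe q = {}" using xpS pcS B2(3) SEs(9) unfolding np_def pe_def by auto
  qed
  have d2: "\<forall>q\<in>set ps2. pe np \<inter> pe q = {}"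
  proof
    fix q assume q: "q \<in> set ps2"
    have "pe q \<subseteq> SE p c" using vp_sub[OF B2(1) q] .
    thus "pe np \<inter> pe q = {}" using xpS B2(6) q SEs(5) unfolding np_def pe_def by auto
  qed
  have v12: "vp E (qs1 @ ps2)"
    using vp_append[OF vp_mono[OF SE_sub Q1(1)] vp_mono[OF SE_sub B2(1)]] vp_disj[OF Q1(1) B2(1)] SEs(9)
    by blast
  have vall: "vp E (np # qs1 @ ps2)" using vp_cons[OF okn v12] d1 d2 by auto
  have card: "card Lf \<le> 1 + card (L p c) + card (L p w)"
  proof -
    have xpE: "{x,p} \<in> E" using EE by simp
    have "Lf \<subseteq> V" by (auto simp: leaves_def)
    also have "V = side x p \<union> side p x" using V_split[OF xpE] .
    also have "side p x = {x}" using leaf_side[of p x] xpE x by (simp add: insert_commute)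
    finally have "Lf \<subseteq> insert x (L p c \<union> L p w)" using Ss(1) pnl unfolding L_def by auto
    hence "card Lf \<le> card (insert x (L p c \<union> L p w))"
      using L_fin EE by (intro card_mono) auto
    also have "\<dots> \<le> Suc (card (L p c \<union> L p w))" by (rule card_insert_le_m1) auto
    also have "\<dots> \<le> Suc (card (L p c) + card (L p w))" using card_Un_le by simp
    finally show ?thesis by simp
  qed
  have mc: "card (L p c) \<ge> 1" using z L_fin[of p c] EE by (metis One_nat_def Suc_leI card_gt_0_iff empty_iff)
  have "length (np # qs1 @ ps2) \<ge> (card Lf - 1) div 2"
    using ar5[OF mc card] Q1(2) B2(2) by simp
  moreover have "length (np # qs1 @ ps2) \<ge> 2" using Q1(3) by (cases qs1) auto
  moreover have "fst ((np # qs1 @ ps2)!0) = x" unfolding np_def by simp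
  moreover have "fst ((np # qs1 @ ps2)!1) = y" using Q1(3,4) by (cases qs1) auto
  ultimately show ?thesis using vall by blast
qed


lemma noncherry_pairs:
  assumes x: "x \<in> Lf" and y: "y \<in> Lf" and xy: "x \<noteq> y" and nc: "\<not> (\<exists>w\<in>V. {x,w} \<in> E \<and> {y,w} \<in> E)"
    and n3: "card Lf \<ge> 3"
  shows "\<exists>ps. vp E ps \<and> length ps \<ge> (card Lf - 1) div 2 \<and> length ps \<ge> 2 \<and> fst (ps!0) = x \<and> fst (ps!1) = y"
proof -
  have xV: "x \<in> V" and yV: "y \<in> V" using x y by (auto simp: leaves_def)
  obtain p where xp: "{x,p} \<in> E" using rtr_touch[OF conn[OF xV yV] xy] by blast
  have px: "{p,x} \<in> E" using xp by (simp add: insert_commute)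
  have spx: "side p x = {x}" using leaf_side[OF px x] .
  have pV: "p \<in> V" using edgeD(2)[OF xp] .
  have pnl: "p \<notin> Lf"
  proof
    assume "p \<in> Lf"
    hence "side x p = {p}" using leaf_side[OF xp] by simp
    hence "V = {p,x}" using V_split[OF xp] spx by auto
    hence "Lf \<subseteq> {p,x}" by (auto simp: leaves_def)
    hence "card Lf \<le> card {p,x}" by (intro card_mono) auto
    also have "\<dots> \<le> 2" by (simp add: card_insert_le_m1)
    finally show False using n3 by simp
  qed
  obtain c w where c: "cfg x p c w" using cfg_exists[OF xp pnl] by blast
  have "y \<in> side x p" using V_split[OF xp] yV spx xy by auto
  moreover have "y \<noteq> p" using y pnl by blast
  ultimately have "y \<in> side p c \<or> y \<in> side p w" using cfg_side(1)[OF c] by blast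
  moreover have "y \<noteq> a" if "{p,a} \<in> E" for a
  proof
    assume "y = a"
    hence "{y,p} \<in> E" using that by (simp add: insert_commute)
    thus False using nc xp pV by blast
  qed
  ultimately show ?thesis
    using noncherry_aux[OF c x y(1) _ _ pnl] noncherry_aux[OF cfg_sym[OF c] x y(1) _ _ pnl] cfg_E[OF c] by blast
qed


definition CH :: "('v \<Rightarrow> bool) \<Rightarrow> 'v set set" where
  "CH g = {e \<in> E. \<exists>u v. e = {u, v} \<and> g u \<noteq> g v}"

lemma changes_CH: "changes E g = card (CH g)" by (simp add: changes_def CH_def)

lemma CH_fin: "finite (CH g)" using finE by (simp add: CH_def)

lemma vp_tl: "vp Es (p # ps) \<Longrightarrow> vp Es ps" by (simp add: vp_def)

lemma lower_aux:
  "vp E ps \<Longrightarrow> (\<forall>p\<in>set ps. g (fst p) \<noteq> g (fst (snd p))) \<Longrightarrow> length ps \<le> card (CH g \<inter> \<Union> (pe ` set ps))"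
proof (induction ps)
  case Nil thus ?case by simp
next
  case (Cons p ps)
  have ok: "okp E p" using Cons(2) by (simp add: vp_def)
  have dis: "\<forall>q\<in>set ps. pe p \<inter> pe q = {}" using Cons(2) by (simp add: vp_def)
  obtain c d where cd: "{c,d} \<in> pe p" "g c \<noteq> g d"
    using rtr_change[of "pe p" "fst p" "fst (snd p)" g] ok Cons(3) unfolding okp_def by auto
  have inE: "{c,d} \<in> E" using cd ok unfolding okp_def by blast
  have inCH: "{c,d} \<in> CH g" using inE cd unfolding CH_def by blast
  have notin: "{c,d} \<notin> \<Union> (pe ` set ps)" using dis cd by blast
  have IH: "length ps \<le> card (CH g \<inter> \<Union> (pe ` set ps))" using Cons vp_tl by auto
  have "insert {c,d} (CH g \<inter> \<Union> (pe ` set ps)) \<subseteq> CH g \<inter> \<Union> (pe ` set (p # ps))" using inCH cd by auto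
  hence "card (insert {c,d} (CH g \<inter> \<Union> (pe ` set ps))) \<le> card (CH g \<inter> \<Union> (pe ` set (p # ps)))"
    using CH_fin by (intro card_mono) auto
  moreover have "card (insert {c,d} (CH g \<inter> \<Union> (pe ` set ps))) = Suc (card (CH g \<inter> \<Union> (pe ` set ps)))"
    using notin CH_fin by (intro card_insert_disjoint) auto
  ultimately show ?case using IH by simp
qed

lemma lower:
  "vp E ps \<Longrightarrow> (\<forall>p\<in>set ps. g (fst p) \<noteq> g (fst (snd p))) \<Longrightarrow> length ps \<le> changes E g"
proof -
  assume a: "vp E ps" "\<forall>p\<in>set ps. g (fst p) \<noteq> g (fst (snd p))"
  have "card (CH g \<inter> \<Union> (pe ` set ps)) \<le> card (CH g)" using CH_fin by (intro card_mono) auto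
  thus ?thesis using lower_aux[OF a] changes_CH by simp
qed

lemma inc_le1: "z \<in> Lf \<Longrightarrow> card {e \<in> E. z \<in> e} \<le> 1"
  by (simp add: leaves_def degree_def)

lemma upper_ind:
  assumes "Z \<subseteq> Lf" "finite Z" shows "changes E (\<lambda>v. v \<in> Z) \<le> card Z"
proof -
  have "CH (\<lambda>v. v \<in> Z) \<subseteq> (\<Union>z\<in>Z. {e \<in> E. z \<in> e})" unfolding CH_def by blast
  hence "card (CH (\<lambda>v. v \<in> Z)) \<le> card (\<Union>z\<in>Z. {e \<in> E. z \<in> e})"
    using assms(2) fin_inc by (intro card_mono) auto
  also have "\<dots> \<le> (\<Sum>z\<in>Z. card {e \<in> E. z \<in> e})" by (rule card_UN_le[OF assms(2)])
  also have "\<dots> \<le> (\<Sum>z\<in>Z. 1)" using assms(1) inc_le1 by (intro sum_mono) auto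
  finally show ?thesis using changes_CH by simp
qed

lemma upper_cherry:
  assumes Z: "Z \<subseteq> Lf" "finite Z" and a: "a \<in> Z" and b: "b \<in> Z" and ab: "a \<noteq> b"
    and aw: "{a,w} \<in> E" and bw: "{b,w} \<in> E"
  shows "changes E (\<lambda>v. v \<in> insert w Z) + 1 \<le> card Z"
proof -
  let ?Z = "insert w Z"
  have wV: "w \<in> V" using edgeD aw by blast
  have aL: "a \<in> Lf" and bL: "b \<in> Lf" using a b Z by auto
  have da: "degree E a \<le> 1" and db: "degree E b \<le> 1" using aL bL by (auto simp: leaves_def)
  have CHsub: "CH (\<lambda>v. v \<in> ?Z) \<subseteq> (\<Union>z\<in>Z - {a,b}. {e \<in> E. z \<in> e}) \<union> ({e \<in> E. w \<in> e} - {{a,w},{b,w}})"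
  proof
    fix e assume "e \<in> CH (\<lambda>v. v \<in> ?Z)"
    then obtain c d where e: "e \<in> E" "e = {c,d}" "(c \<in> ?Z) \<noteq> (d \<in> ?Z)" unfolding CH_def by blast
    have "\<exists>c' d'. e = {c',d'} \<and> c' \<in> ?Z \<and> d' \<notin> ?Z"
    proof (cases "c \<in> ?Z")
      case True thus ?thesis using e by blast
    next
      case False hence "d \<in> ?Z" using e by blast
      moreover have "e = {d,c}" using e by (simp add: insert_commute)
      ultimately show ?thesis using False by blast
    qed
    then obtain c' d' where e': "e = {c',d'}" "c' \<in> ?Z" "d' \<notin> ?Z" by blast
    show "e \<in> (\<Union>z\<in>Z - {a,b}. {e \<in> E. z \<in> e}) \<union> ({e \<in> E. w \<in> e} - {{a,w},{b,w}})"
    proof (cases "c' = w")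
      case True
      have "e \<noteq> {a,w}" using e'(1,3) True a by (auto simp: doubleton_eq_iff)
      moreover have "e \<noteq> {b,w}" using e'(1,3) True b by (auto simp: doubleton_eq_iff)
      ultimately show ?thesis using e(1) e'(1) True by blast
    next
      case False
      hence cZ: "c' \<in> Z" using e'(2) by simp
      have "c' \<noteq> a"
      proof
        assume "c' = a"
        hence "e = {a,w}" using leaf_edge_unique[OF da e(1) aw] e'(1) by simp
        thus False using e' \<open>c' = a\<close> ab by (auto simp: doubleton_eq_iff)
      qed
      moreover have "c' \<noteq> b"
      proof
        assume "c' = b"
        hence "e = {b,w}" using leaf_edge_unique[OF db e(1) bw] e'(1) by simp
        thus False using e' \<open>c' = b\<close> ab by (auto simp: doubleton_eq_iff)
      qed
      ultimately show ?thesis using cZ e(1) e'(1) by blast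
    qed
  qed
  have fZ: "finite (Z - {a,b})" using Z by simp
  have c1: "card (\<Union>z\<in>Z - {a,b}. {e \<in> E. z \<in> e}) \<le> card Z - 2"
  proof -
    have "card (\<Union>z\<in>Z - {a,b}. {e \<in> E. z \<in> e}) \<le> (\<Sum>z\<in>Z - {a,b}. card {e \<in> E. z \<in> e})"
      by (rule card_UN_le[OF fZ])
    also have "\<dots> \<le> (\<Sum>z\<in>Z - {a,b}. 1)" using Z inc_le1 by (intro sum_mono) auto
    also have "\<dots> = card (Z - {a,b})" by simp
    also have "\<dots> = card Z - 2" using a b ab Z(2) by (simp add: card_Diff_subset)
    finally show ?thesis .
  qed
  have c2: "card ({e \<in> E. w \<in> e} - {{a,w},{b,w}}) \<le> 1"
  proof -
    have sub: "{{a,w},{b,w}} \<subseteq> {e \<in> E. w \<in> e}" using aw bw by auto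
    have "{a,w} \<noteq> {b,w}" using ab by (auto simp: doubleton_eq_iff)
    hence two: "card {{a,w},{b,w}} = 2" by simp
    have "card ({e \<in> E. w \<in> e} - {{a,w},{b,w}}) = card {e \<in> E. w \<in> e} - 2"
      using card_Diff_subset[OF _ sub] two by simp
    moreover have "card {e \<in> E. w \<in> e} \<le> 3" using deg3 wV by (simp add: degree_def)
    ultimately show ?thesis by simp
  qed
  have "card (CH (\<lambda>v. v \<in> ?Z)) \<le> card ((\<Union>z\<in>Z - {a,b}. {e \<in> E. z \<in> e}) \<union> ({e \<in> E. w \<in> e} - {{a,w},{b,w}}))"
    using fZ fin_inc by (intro card_mono[OF _ CHsub]) auto
  also have "\<dots> \<le> card (\<Union>z\<in>Z - {a,b}. {e \<in> E. z \<in> e}) + card ({e \<in> E. w \<in> e} - {{a,w},{b,w}})"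
    by (rule card_Un_le)
  finally have "card (CH (\<lambda>v. v \<in> ?Z)) \<le> card Z - 2 + 1" using c1 c2 by simp
  moreover have "card Z \<ge> 2"
  proof -
    have "{a,b} \<subseteq> Z" using a b by simp
    hence "card {a,b} \<le> card Z" using Z(2) by (rule card_mono[rotated])
    thus ?thesis using ab by simp
  qed
  ultimately show ?thesis using changes_CH by simp
qed

lemma touch: "okp E q \<Longrightarrow> z = fst q \<or> z = fst (snd q) \<Longrightarrow> \<exists>e\<in>pe q. z \<in> e"
proof -
  assume ok: "okp E q" and z: "z = fst q \<or> z = fst (snd q)"
  have r: "(adj (pe q))\<^sup>*\<^sup>* (fst q) (fst (snd q))" and ne: "fst q \<noteq> fst (snd q)" using ok by (auto simp: okp_def)
  show ?thesis using z
  proof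
    assume z1: "z = fst q"
    obtain c where "{fst q, c} \<in> pe q" using rtr_touch[OF r ne] by blast
    thus ?thesis using z1 by blast
  next
    assume z2: "z = fst (snd q)"
    have ne2: "fst (snd q) \<noteq> fst q" using ne by simp
    obtain c where "{fst (snd q), c} \<in> pe q" using rtr_touch[OF rtr_sym[OF r] ne2] by blast
    thus ?thesis using z2 by blast
  qed
qed

lemma share_leaf:
  assumes "okp E q1" "okp E q2" "pe q1 \<inter> pe q2 = {}" "z \<in> Lf"
    "z = fst q1 \<or> z = fst (snd q1)" "z = fst q2 \<or> z = fst (snd q2)"
  shows False
proof -
  obtain e1 where e1: "e1 \<in> pe q1" "z \<in> e1" using touch[OF assms(1,5)] by blast
  obtain e2 where e2: "e2 \<in> pe q2" "z \<in> e2" using touch[OF assms(2,6)] by blast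
  have i1: "e1 \<in> E" using e1 assms(1) by (auto simp: okp_def)
  have i2: "e2 \<in> E" using e2 assms(2) by (auto simp: okp_def)
  have dz: "degree E z \<le> 1" using assms(4) by (simp add: leaves_def)
  have "e1 = e2" using leaf_edge_unique[OF dz i1 i2 e1(2) e2(2)] .
  thus False using e1 e2 assms(3) by blast
qed

lemma vp_nth_disj: assumes "vp Es ps" "i < length ps" "j < length ps" "i \<noteq> j"
  shows "pe (ps!i) \<inter> pe (ps!j) = {}"
proof -
  have s: "sorted_wrt (\<lambda>p q. pe p \<inter> pe q = {}) ps" using assms(1) by (simp add: vp_def)
  show ?thesis
  proof (cases "i < j")
    case True thus ?thesis using sorted_wrt_nth_less[OF s True assms(3)] by simp
  next
    case False hence "j < i" using assms(4) by simp
    thus ?thesis using sorted_wrt_nth_less[OF s _ assms(2)] by blast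
  qed
qed

lemma vp_ok: "vp Es ps \<Longrightarrow> i < length ps \<Longrightarrow> okp Es (ps!i)"
  unfolding vp_def by simp

end

lemma changes_le_card: "finite E \<Longrightarrow> changes E g \<le> card E"
  unfolding changes_def by (intro card_mono) auto

lemma pscore_le:
  assumes "finite E" "\<forall>z\<in>X. g (lab z) = f z" shows "pscore X V E lab f \<le> changes E g"
proof -
  let ?S = "{changes E g | g. \<forall>x\<in>X. g (lab x) = f x}"
  have "?S \<subseteq> {..card E}" using changes_le_card[OF assms(1)] by auto
  hence "finite ?S" using finite_subset by blast
  moreover have "changes E g \<in> ?S" using assms(2) by blast
  ultimately show ?thesis unfolding pscore_def by (rule Min_le)
qed

lemma pscore_ge:
  assumes "finite E" "inj_on lab X" "\<And>g. \<forall>z\<in>X. g (lab z) = f z \<Longrightarrow> c \<le> changes E g"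
  shows "c \<le> pscore X V E lab f"
proof -
  let ?S = "{changes E g | g. \<forall>x\<in>X. g (lab x) = f x}"
  have "?S \<subseteq> {..card E}" using changes_le_card[OF assms(1)] by auto
  hence fin: "finite ?S" using finite_subset by blast
  define g0 where "g0 = (\<lambda>v. f (inv_into X lab v))"
  have "\<forall>z\<in>X. g0 (lab z) = f z" using assms(2) unfolding g0_def by simp
  hence "changes E g0 \<in> ?S" by (intro CollectI exI[of _ g0]) simp
  hence ne: "?S \<noteq> {}" by auto
  have "\<forall>a\<in>?S. c \<le> a"
  proof
    fix a assume "a \<in> ?S"
    then obtain g where "a = changes E g" "\<forall>x\<in>X. g (lab x) = f x" by blast
    thus "c \<le> a" using assms(3) by simp
  qed
  thus ?thesis unfolding pscore_def using Min_ge_iff[OF fin ne] by blast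
qed

lemma bpt_bintree: "binary_phylo_tree X V E lab \<Longrightarrow> bintree V E"
  unfolding binary_phylo_tree_def phylo_tree_def bintree_def by blast

lemma one_dir:
  fixes X :: "'x set" and V :: "'v set" and E :: "'v set set" and lab :: "'x \<Rightarrow> 'v"
    and V' :: "'w set" and E' :: "'w set set" and lab' :: "'x \<Rightarrow> 'w"
  assumes k1: "k \<ge> 1" and T: "binary_phylo_tree X V E lab" and T': "binary_phylo_tree X V' E' lab'"
    and n: "card X \<ge> 2 * k + 1" and A: "Achar k X V E lab = Achar k X V' E' lab'"
    and x: "x \<in> X" and y: "y \<in> X" and xy: "x \<noteq> y" and ch: "cherry V E lab x y"
  shows "cherry V' E' lab' x y"
proof (rule ccontr)
  assume nch: "\<not> cherry V' E' lab' x y"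
  interpret B: bintree V E using bpt_bintree[OF T] .
  interpret B': bintree V' E' using bpt_bintree[OF T'] .
  have bij: "bij_betw lab X (leaves V E)" and bij': "bij_betw lab' X (leaves V' E')" and finX: "finite X"
    using T T' unfolding binary_phylo_tree_def phylo_tree_def by auto
  have inj: "inj_on lab X" and inj': "inj_on lab' X" using bij bij' by (auto simp: bij_betw_def)
  have im: "lab ` X = leaves V E" and im': "lab' ` X = leaves V' E'" using bij bij' by (auto simp: bij_betw_def)
  have cL': "card (leaves V' E') = card X" using bij' by (simp add: bij_betw_same_card)
  have lx': "lab' x \<in> leaves V' E'" and ly': "lab' y \<in> leaves V' E'" using x y im' by auto
  have lxy': "lab' x \<noteq> lab' y" using inj' x y xy by (auto dest: inj_onD)
  have nc: "\<not> (\<exists>w\<in>V'. {lab' x,w} \<in> E' \<and> {lab' y,w} \<in> E')" using nch unfolding cherry_def .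
  have n3: "card (leaves V' E') \<ge> 3" using cL' n k1 by simp
  obtain ps where ps: "B'.vp E' ps" "length ps \<ge> (card (leaves V' E') - 1) div 2" "length ps \<ge> 2"
    "fst (ps!0) = lab' x" "fst (ps!1) = lab' y"
    using B'.noncherry_pairs[OF lx' ly' lxy' nc n3] by blast
  define K where "K = max k 2"
  have K2: "K \<ge> 2" unfolding K_def by simp
  have lenK: "K \<le> length ps"
  proof -
    have "k \<le> (card X - 1) div 2" using n by linarith
    thus ?thesis using ps(2,3) cL' unfolding K_def by simp
  qed
  define qs where "qs = take K ps"
  have lq: "length qs = K" using lenK unfolding qs_def by simp
  have vq: "B'.vp E' qs"
    using ps(1) unfolding qs_def B'.vp_def by (auto dest: in_set_takeD simp: sorted_wrt_take)
  have q0: "fst (qs!0) = lab' x" and q1: "fst (qs!1) = lab' y" using ps(4,5) K2 unfolding qs_def by auto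
  have okq: "B'.okp E' (qs!i)" if "i < K" for i using B'.vp_ok[OF vq] that lq by simp
  have fstL: "fst (qs!i) \<in> leaves V' E'" if "i < K" for i using okq[OF that] by (simp add: B'.okp_def)
  have sndL: "fst (snd (qs!i)) \<in> leaves V' E'" if "i < K" for i using okq[OF that] by (simp add: B'.okp_def)
  have D1: "i = j" if "i < K" "j < K" "fst (qs!i) = fst (qs!j)" for i j
  proof (rule ccontr)
    assume "i \<noteq> j"
    hence "B'.pe (qs!i) \<inter> B'.pe (qs!j) = {}" using B'.vp_nth_disj[OF vq] that lq by simp
    thus False using B'.share_leaf[OF okq[OF that(1)] okq[OF that(2)] _ fstL[OF that(1)]] that(3) by simp
  qed
  have D2: "fst (snd (qs!j)) \<noteq> fst (qs!i)" if "i < K" "j < K" for i j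
  proof (cases "i = j")
    case True thus ?thesis using okq[OF that(1)] unfolding B'.okp_def by metis
  next
    case False
    hence "B'.pe (qs!i) \<inter> B'.pe (qs!j) = {}" using B'.vp_nth_disj[OF vq] that lq by simp
    thus ?thesis using B'.share_leaf[OF okq[OF that(1)] okq[OF that(2)] _ fstL[OF that(1)]] by auto
  qed
  define Sv where "Sv = fst ` set qs"
  have Sv_nth: "Sv = {fst (qs!i) | i. i < K}"
  proof
    show "Sv \<subseteq> {fst (qs!i) | i. i < K}"
    proof
      fix a assume "a \<in> Sv"
      then obtain p where p: "p \<in> set qs" "a = fst p" unfolding Sv_def by blast
      then obtain i where "i < length qs" "qs!i = p" by (meson in_set_conv_nth)
      thus "a \<in> {fst (qs!i) | i. i < K}" using p lq by blast
    qed
    show "{fst (qs!i) | i. i < K} \<subseteq> Sv" unfolding Sv_def using lq nth_mem by blast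
  qed
  have dist: "distinct (map fst qs)" using D1 lq by (auto simp: distinct_conv_nth)
  have cSv: "card Sv = K" using distinct_card[OF dist] lq unfolding Sv_def by simp
  have SvL: "Sv \<subseteq> leaves V' E'" using fstL unfolding Sv_nth by blast
  have sndnot: "fst (snd p) \<notin> Sv" if pin: "p \<in> set qs" for p
  proof -
    obtain j where "j < length qs" "qs!j = p" using pin by (meson in_set_conv_nth)
    hence j: "j < K" "p = qs!j" using lq by auto
    thus ?thesis using D2 j unfolding Sv_nth by auto
  qed
  define SX where "SX = {z \<in> X. lab' z \<in> Sv}"
  have SXX: "SX \<subseteq> X" unfolding SX_def by blast
  have "qs!0 \<in> set qs" "qs!1 \<in> set qs" using lq K2 by auto
  hence "lab' x \<in> Sv" "lab' y \<in> Sv" using q0 q1 unfolding Sv_def by (metis image_eqI)+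
  hence xS: "x \<in> SX" and yS: "y \<in> SX" using x y unfolding SX_def by auto
  have imS: "lab' ` SX = Sv" using SvL im' unfolding SX_def by auto
  have cSX: "card SX = K"
  proof -
    have "inj_on lab' SX" using inj' SXX by (rule inj_on_subset)
    hence "card (lab' ` SX) = card SX" by (rule card_image)
    thus ?thesis using imS cSv by simp
  qed
  define f where "f = restrict (\<lambda>z. lab' z \<in> Sv) X"
  have fE: "f \<in> X \<rightarrow>\<^sub>E (UNIV :: bool set)" unfolding f_def by simp
  have fval: "f z = (z \<in> SX)" if "z \<in> X" for z using that unfolding f_def SX_def by simp
  have finE: "finite E" and finE': "finite E'" using B.finE B'.finE .
  have P'ge: "K \<le> pscore X V' E' lab' f"
  proof (rule pscore_ge[OF finE' inj'])
    fix g assume g: "\<forall>z\<in>X. g (lab' z) = f z"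
    have "\<forall>p\<in>set qs. g (fst p) \<noteq> g (fst (snd p))"
    proof
      fix p assume p: "p \<in> set qs"
      have a: "fst p \<in> Sv" using p unfolding Sv_def by blast
      then obtain a' where a': "a' \<in> X" "lab' a' = fst p" using SvL im' by (metis imageE subsetD)
      have "g (fst p) = True" using g a' a fval[OF a'(1)] unfolding SX_def by auto
      moreover have b: "fst (snd p) \<in> leaves V' E'" using vq p by (simp add: B'.vp_def B'.okp_def)
      then obtain b' where b': "b' \<in> X" "lab' b' = fst (snd p)" using im' by (metis imageE)
      have "g (fst (snd p)) = False" using g b' sndnot[OF p] fval[OF b'(1)] unfolding SX_def by auto
      ultimately show "g (fst p) \<noteq> g (fst (snd p))" by simp
    qed
    from B'.lower[OF vq this] show "K \<le> changes E' g" using lq by simp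
  qed
  have P'le: "pscore X V' E' lab' f \<le> K"
  proof -
    have "\<forall>z\<in>X. (\<lambda>v. v \<in> Sv) (lab' z) = f z" using fval unfolding SX_def by auto
    hence "pscore X V' E' lab' f \<le> changes E' (\<lambda>v. v \<in> Sv)" by (rule pscore_le[OF finE'])
    also have "\<dots> \<le> card Sv" using B'.upper_ind[OF SvL] finite_subset[OF SvL] B'.finV
      by (simp add: leaves_def)
    finally show ?thesis using cSv by simp
  qed
  obtain w where w: "w \<in> V" "{lab x, w} \<in> E" "{lab y, w} \<in> E" using ch unfolding cherry_def by blast
  have lxy: "lab x \<noteq> lab y" using inj x y xy by (auto dest: inj_onD)
  have wnl: "w \<notin> leaves V E"
  proof
    assume "w \<in> leaves V E"
    hence dw: "degree E w \<le> 1" by (simp add: leaves_def)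
    have "{lab x, w} = {lab y, w}" using B.leaf_edge_unique[OF dw w(2) w(3)] by simp
    thus False using lxy by (auto simp: doubleton_eq_iff)
  qed
  define Z where "Z = lab ` SX"
  have ZL: "Z \<subseteq> leaves V E" using im SXX unfolding Z_def by blast
  have finZ: "finite Z" unfolding Z_def using finX SXX finite_subset by blast
  have cZ: "card Z = K" unfolding Z_def using card_image[OF inj_on_subset[OF inj SXX]] cSX by simp
  have Tle: "pscore X V E lab f + 1 \<le> K"
  proof -
    have ext: "\<forall>z\<in>X. (\<lambda>v. v \<in> insert w Z) (lab z) = f z"
    proof
      fix z assume z: "z \<in> X"
      have "lab z \<noteq> w" using z im wnl by blast
      moreover have "(lab z \<in> Z) = (z \<in> SX)" unfolding Z_def using inj SXX z by (auto dest: inj_onD)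
      ultimately show "(\<lambda>v. v \<in> insert w Z) (lab z) = f z" using fval[OF z] by simp
    qed
    have "pscore X V E lab f \<le> changes E (\<lambda>v. v \<in> insert w Z)" by (rule pscore_le[OF finE ext])
    moreover have "changes E (\<lambda>v. v \<in> insert w Z) + 1 \<le> card Z"
      using B.upper_cherry[OF ZL finZ _ _ lxy w(2) w(3)] xS yS unfolding Z_def by blast
    ultimately show ?thesis using cZ by simp
  qed
  show False
  proof (cases "k \<ge> 2")
    case True
    hence Kk: "K = k" unfolding K_def by simp
    have "f \<in> Achar k X V' E' lab'" using fE P'ge P'le Kk unfolding Achar_def by simp
    hence "f \<in> Achar k X V E lab" using A by simp
    hence "pscore X V E lab f = k" unfolding Achar_def by simp
    thus False using Tle Kk by simp
  next
    case False
    hence k1': "k = 1" and K2': "K = 2" using k1 unfolding K_def by auto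
    have "SX \<noteq> X"
    proof
      assume "SX = X" hence "card X = 2" using cSX K2' by simp
      thus False using n k1' by simp
    qed
    then obtain z0 where z0: "z0 \<in> X" "z0 \<notin> SX" using SXX by blast
    have Tge: "1 \<le> pscore X V E lab f"
    proof (rule pscore_ge[OF finE inj])
      fix g assume g: "\<forall>z\<in>X. g (lab z) = f z"
      have "g (lab x) = f x" "g (lab z0) = f z0" using g x z0(1) by blast+
      moreover have "f x = True" "f z0 = False" using fval[OF x] fval[OF z0(1)] xS z0(2) by simp_all
      ultimately have gne: "g (lab x) \<noteq> g (lab z0)" by simp
      have "lab x \<in> leaves V E" "lab z0 \<in> leaves V E" using im x z0(1) by blast+
      hence "lab x \<in> V" "lab z0 \<in> V" by (simp_all add: leaves_def)
      hence pth: "(adj E)\<^sup>*\<^sup>* (lab x) (lab z0)" by (rule B.conn)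
      obtain c d where cd: "{c,d} \<in> E" "g c \<noteq> g d" using rtr_change[OF pth gne] by blast
      hence "{c,d} \<in> B.CH g" unfolding B.CH_def by blast
      hence "B.CH g \<noteq> {}" by blast
      hence "card (B.CH g) \<ge> 1" using B.CH_fin by (simp add: Suc_leI card_gt_0_iff)
      thus "1 \<le> changes E g" using B.changes_CH by simp
    qed
    have "pscore X V E lab f = 1" using Tge Tle K2' by simp
    hence "f \<in> Achar k X V E lab" using fE k1' unfolding Achar_def by simp
    hence "f \<in> Achar k X V' E' lab'" using A by simp
    hence "pscore X V' E' lab' f = 1" using k1' unfolding Achar_def by simp
    thus False using P'ge K2' by simp
  qed
qed

theorem proposition4:
  fixes X :: "'x set" and V :: "'v set" and E :: "'v set set" and lab :: "'x \<Rightarrow> 'v"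
    and V' :: "'w set" and E' :: "'w set set" and lab' :: "'x \<Rightarrow> 'w"
    and k n :: nat and x y :: 'x
  assumes "k \<ge> 1"
    and "binary_phylo_tree X V E lab"
    and "binary_phylo_tree X V' E' lab'"
    and "card X = n" and "n \<ge> 2 * k + 1"
    and "Achar k X V E lab = Achar k X V' E' lab'"
    and "x \<in> X" and "y \<in> X" and "x \<noteq> y"
  shows "cherry V E lab x y \<longleftrightarrow> cherry V' E' lab' x y"
proof -
  have n': "card X \<ge> 2 * k + 1" using assms(4,5) by simp
  have A': "Achar k X V' E' lab' = Achar k X V E lab" using assms(6) by simp
  show ?thesis
  proof
    assume "cherry V E lab x y"
    thus "cherry V' E' lab' x y" by (rule one_dir[OF assms(1,2,3) n' assms(6,7,8,9)])
  next
    assume "cherry V' E' lab' x y"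
    thus "cherry V E lab x y" by (rule one_dir[OF assms(1,3,2) n' A' assms(7,8,9)])
  qed
qed

end
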